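(* $\mathrm{GL}_6(\mathbb{F}_2)$ does not contain a subgroup isomorphic to $\mathrm{PSL}_2(\mathbb{F}_8)\times C_2$. *)

theory Defs
  imports "HOL-Analysis.Analysis" "HOL-Algebra.Algebra"
begin

definition GL6 :: "('k::field ^ 6 ^ 6) monoid" where
  "GL6 = \<lparr>carrier = {A. invertible A}, mult = (**), one = mat 1\<rparr>"

definition SL2 :: "('k::field ^ 2 ^ 2) monoid" where
  "SL2 = \<lparr>carrier = {A. det A = 1}, mult = (**), one = mat 1\<rparr>"

definition SL2_centre :: "('k::field ^ 2 ^ 2) set" where
  "SL2_centre = {mat c | c. c * c = 1}"

definition PSL2 :: "('k::field ^ 2 ^ 2) set monoid" where
  "PSL2 = SL2 Mod SL2_centre"

definition C2 :: "int monoid" where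
  "C2 = integer_mod_group 2"

end

theory Submission
  imports Defs "HOL-Computational_Algebra.Primes" "HOL-Number_Theory.Residues"
begin


lemma funpow_add_fun:
  fixes f :: "'v::ab_group_add \<Rightarrow> 'v"
  assumes "\<And>x y. f (x + y) = f x + (f y :: 'v::ab_group_add)"
  shows "(f^^n) (x + y) = (f^^n) x + (f^^n) y"
  by (induction n) (auto simp: assms)

lemma funpow_zero_fun:
  fixes f :: "'v::ab_group_add \<Rightarrow> 'v"
  assumes "\<And>x y. f (x + y) = f x + (f y :: 'v::ab_group_add)"
  shows "(f^^n) 0 = 0"
proof -
  have "(f^^n) 0 = (f^^n) 0 + (f^^n) 0" using funpow_add_fun[OF assms, of n 0 0] by simp
  then show ?thesis by (metis add_cancel_right_right)
qed

lemma period_mod: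
  assumes "(f^^9) v = v"
  shows "(f^^n) v = (f^^(n mod 9)) v"
proof -
  have m: "(f^^(9*m)) v = v" for m
    by (induction m) (simp_all add: funpow_add assms)
  have "n = n mod 9 + 9 * (n div 9)" by simp
  then have "(f^^n) v = (f^^(n mod 9)) ((f^^(9 * (n div 9))) v)"
    by (metis funpow_add o_apply)
  then show ?thesis using m by simp
qed

lemma orbit_distinct:
  assumes "(f^^9) v = v" "(f^^3) v \<noteq> v" "i < 9" "j < 9" "(f^^i) v = (f^^j) v"
  shows "i = j"
proof (rule ccontr)
  assume ne: "i \<noteq> j"
  have key: "(f^^d) v = v" if "i' < j'" "j' < 9" "(f^^i') v = (f^^j') v" "d = j' - i'" for i' j' d
  proof -
    have "(f^^(9 - i')) ((f^^i') v) = (f^^(9 - i')) ((f^^j') v)" using that by simp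
    then have "(f^^(9 - i' + i')) v = (f^^(9 - i' + j')) v" by (simp add: funpow_add)
    moreover have "9 - i' + j' = d + 9" using that by simp
    moreover have "(f^^(d + 9)) v = (f^^d) v" using assms(1) by (simp add: funpow_add)
    ultimately show ?thesis using assms(1) that by (simp add: funpow_add)
  qed
  obtain d where d: "(f^^d) v = v" "0 < d" "d < 9"
  proof (cases "i < j")
    case True
    then show ?thesis using key[of i j "j - i"] assms that by simp
  next
    case False
    then have "j < i" using ne by simp
    then show ?thesis using key[of j i "i - j"] assms that by simp
  qed
  have dm: "(f^^(d*m)) v = v" for m
    by (induction m) (simp_all add: funpow_add d(1) add.commute)
  define m where "m = (if d = 3 then 1 else if d = 6 then 2 else if d mod 3 = 1 then 3 else (6::nat))"
  have "d \<in> {1,2,3,4,5,6,7,8}" using d by auto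
  then have "(d * m) mod 9 = 3" unfolding m_def by auto
  then have "(f^^3) v = v" using dm[of m] period_mod[OF assms(1), of "d*m"] by simp
  then show False using assms(2) by simp
qed

lemma orbit_dvd:
  fixes S :: "'v set"
  assumes fin: "finite S" and cl: "\<And>v. v \<in> S \<Longrightarrow> f v \<in> S"
    and p9: "\<And>v. v \<in> S \<Longrightarrow> (f^^9) v = v" and p3: "\<And>v. v \<in> S \<Longrightarrow> (f^^3) v \<noteq> v"
  shows "9 dvd card S"
proof -
  define orb where "orb v = (\<lambda>i. (f^^i) v) ` {..<9}" for v
  have clp: "(f^^i) v \<in> S" if "v \<in> S" for v i using that by (induction i) (auto intro: cl)
  have orb_all: "orb v = range (\<lambda>i. (f^^i) v)" if "v \<in> S" for v
  proof
    show "range (\<lambda>i. (f^^i) v) \<subseteq> orb v"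
    proof
      fix x assume "x \<in> range (\<lambda>i. (f^^i) v)"
      then obtain i where "x = (f^^i) v" by auto
      then show "x \<in> orb v" using period_mod[OF p9[OF that], of i] unfolding orb_def
        by (metis imageI lessThan_iff mod_less_divisor zero_less_numeral)
    qed
  qed (auto simp: orb_def)
  let ?C = "orb ` S"
  have U: "\<Union>?C = S"
  proof
    show "\<Union>?C \<subseteq> S" using clp by (auto simp: orb_def)
    show "S \<subseteq> \<Union>?C" unfolding orb_def by (force intro: image_eqI[where x=0])
  qed
  have c9: "card c = 9" if cC: "c \<in> ?C" for c
  proof -
    obtain v where v: "v \<in> S" "c = orb v" using cC by auto
    have "inj_on (\<lambda>i. (f^^i) v) {..<9}"
      using orbit_distinct[OF p9[OF v(1)] p3[OF v(1)]] by (auto simp: inj_on_def)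
    then show ?thesis using v by (simp add: orb_def card_image)
  qed
  have disj: "c1 \<inter> c2 = {}" if cc: "c1 \<in> ?C" "c2 \<in> ?C" "c1 \<noteq> c2" for c1 c2
  proof (rule ccontr)
    assume "c1 \<inter> c2 \<noteq> {}"
    then obtain v1 v2 i j where v: "v1 \<in> S" "v2 \<in> S" "c1 = orb v1" "c2 = orb v2"
      "(f^^i) v1 = (f^^j) v2"
      using cc unfolding orb_def by blast
    have sub: "orb a \<subseteq> orb b" if "a \<in> S" "b \<in> S" "a = (f^^k) b" for a b k
    proof -
      have "range (\<lambda>i. (f^^i) a) \<subseteq> range (\<lambda>i. (f^^i) b)"
        using that by (auto simp: funpow_add[symmetric] o_def) (metis funpow_add o_apply rangeI)
      then show ?thesis using orb_all that by simp
    qed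
    have bk: "b = (f^^(9 - (k mod 9))) ((f^^k) b)" if "b \<in> S" for b k
    proof -
      have "(f^^(9 - (k mod 9))) ((f^^k) b) = (f^^(9 - (k mod 9) + k)) b" by (simp only: funpow_add o_apply)
      also have "\<dots> = (f^^((9 - (k mod 9) + k) mod 9)) b" using period_mod[OF p9[OF that]] by blast
      also have "(9 - (k mod 9) + k) mod 9 = 0"
        by (metis add.commute add_diff_inverse_nat le_add_diff_inverse2 mod_add_right_eq
            mod_le_divisor mod_self not_less zero_less_numeral)
      finally show ?thesis by simp
    qed
    let ?w = "(f^^i) v1"
    have w: "?w \<in> S" using clp v by simp
    have "orb v1 = orb ?w"
      using sub[OF w v(1) refl] sub[OF v(1) w bk[OF v(1), of i]] by blast
    moreover have "orb v2 = orb ?w"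
    proof
      show "orb ?w \<subseteq> orb v2" using sub[OF w v(2) v(5)] .
      have "v2 = (f ^^ (9 - j mod 9)) ?w" using bk[OF v(2), of j] v(5) by simp
      then show "orb v2 \<subseteq> orb ?w" using sub[OF v(2) w] by blast
    qed
    ultimately show False using cc v by simp
  qed
  have "9 * card ?C = card (\<Union>?C)"
    by (rule card_partition) (use U fin c9 disj in auto)
  then show ?thesis using U by (metis dvd_triv_left)
qed

lemma subgrp_card_dvd:
  fixes S :: "'v::{ab_group_add,finite} set"
  assumes z: "0 \<in> S" and cl: "\<And>x y. x \<in> S \<Longrightarrow> y \<in> S \<Longrightarrow> x + y \<in> S"
    and c2: "\<And>x::'v. x + x = 0"
  shows "card S dvd card (UNIV :: 'v set)"
proof -
  have neg: "-x = x" for x :: 'v using minus_unique[OF c2[of x]] .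
  let ?C = "(\<lambda>x. (+) x ` S) ` UNIV"
  have U: "\<Union>?C = UNIV"
  proof -
    have "x \<in> (+) x ` S" for x using z by (metis add_0_right image_eqI)
    then show ?thesis by blast
  qed
  have cs: "card c = card S" if cC: "c \<in> ?C" for c
  proof -
    obtain x where "c = (+) x ` S" using cC by auto
    moreover have "inj_on ((+) x) S" by (simp add: inj_on_def)
    ultimately show ?thesis by (simp add: card_image)
  qed
  have sub: "(+) x1 ` S \<subseteq> (+) x2 ` S" if "x1 + s1 = x2 + s2" "s1 \<in> S" "s2 \<in> S" for x1 x2 s1 s2
  proof
    fix y assume "y \<in> (+) x1 ` S"
    then obtain s where s: "s \<in> S" "y = x1 + s" by auto
    have "x1 = x2 + s2 - s1" using that(1) by (simp add: eq_diff_eq)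
    also have "\<dots> = x2 + s2 + s1" using neg[of s1] by (simp only: diff_conv_add_uminus)
    finally have "x1 = x2 + s2 + s1" .
    then have "y = x2 + (s2 + s1 + s)" using s by (simp add: add.assoc)
    then show "y \<in> (+) x2 ` S" using cl that s by blast
  qed
  have disj: "c1 \<inter> c2 = {}" if cc: "c1 \<in> ?C" "c2 \<in> ?C" "c1 \<noteq> c2" for c1 c2
  proof (rule ccontr)
    assume "c1 \<inter> c2 \<noteq> {}"
    then obtain y where y: "y \<in> c1" "y \<in> c2" by blast
    obtain x1 x2 where x: "c1 = (+) x1 ` S" "c2 = (+) x2 ` S" using cc by blast
    obtain s1 s2 where "y = x1 + s1" "y = x2 + s2" "s1 \<in> S" "s2 \<in> S" using y x by blast
    then have "c1 = (+) x1 ` S" "c2 = (+) x2 ` S" "x1 + s1 = x2 + s2" "s1 \<in> S" "s2 \<in> S"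
      using x by auto
    then show False using sub[of x1 s1 x2 s2] sub[of x2 s2 x1 s1] cc(3) by auto
  qed
  have "card S * card ?C = card (\<Union>?C)"
    by (rule card_partition) (use cs disj in auto)
  then show ?thesis using U by (metis dvd_triv_left)
qed

lemma pow2_dvd64: "(n::nat) dvd 64 \<Longrightarrow> \<exists>i\<le>6. n = 2^i"
  using divides_primepow_nat[of 2 n 6] by simp

lemma no_ord18:
  fixes f :: "'v::{ab_group_add,finite} \<Rightarrow> 'v"
  assumes add: "\<And>x y. f (x + y) = f x + f y" and c2: "\<And>x::'v. x + x = 0"
    and card: "card (UNIV :: 'v set) = 64" and p18: "\<And>v. (f^^18) v = v"
    and n9: "\<exists>v. (f^^9) v \<noteq> v" and n6: "\<exists>v. (f^^6) v \<noteq> v"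
  shows False
proof -
  have neg: "-x = x" for x :: 'v using minus_unique[OF c2[of x]] .
  have pa: "(f^^a) ((f^^b) v) = (f^^(a+b)) v" for a b v by (simp add: funpow_add)
  have fa: "(f^^n) (x + y) = (f^^n) x + (f^^n) y" for n x y by (rule funpow_add_fun[OF add])
  have f0: "(f^^n) 0 = 0" for n by (rule funpow_zero_fun[OF add])
  have gp: "((f^^2)^^n) = f^^(2*n)" for n by (simp add: funpow_mult)
  define K where "K = {v. (f^^6) v = v}"
  define F where "F = {v. (f^^9) v = v}"
  have Kd: "card K dvd 64" unfolding K_def using subgrp_card_dvd[of "{v. (f^^6) v = v}"] card c2 fa f0 by auto
  have Fd: "card F dvd 64" unfolding F_def using subgrp_card_dvd[of "{v. (f^^9) v = v}"] card c2 fa f0 by auto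
  have KU: "card K < 64"
  proof -
    have "K \<noteq> UNIV" using n6 K_def by auto
    then have "card K < card (UNIV :: 'v set)" using psubset_card_mono[of UNIV K] by auto
    then show ?thesis using card by simp
  qed
  have FU: "card F < 64"
  proof -
    have "F \<noteq> UNIV" using n9 F_def by auto
    then have "card F < card (UNIV :: 'v set)" using psubset_card_mono[of UNIV F] by auto
    then show ?thesis using card by simp
  qed
  have "9 dvd card (- K)"
  proof (rule orbit_dvd[where f="f^^2"])
    show "finite (- K)" by simp
    show "(f^^2) v \<in> - K" if "v \<in> - K" for v
    proof
      assume "(f^^2) v \<in> K"
      then have "(f^^16) ((f^^6) ((f^^2) v)) = (f^^16) ((f^^2) v)" unfolding K_def by simp
      then have "(f^^(6+18)) v = (f^^(18)) v" by (simp add: pa)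
      then have "(f^^6) ((f^^18) v) = (f^^(18)) v" by (simp only: pa)
      then show False using that K_def p18 by auto
    qed
    show "((f^^2)^^9) v = v" if "v \<in> - K" for v using p18 by (simp add: gp)
    show "((f^^2)^^3) v \<noteq> v" if "v \<in> - K" for v using that by (simp add: gp K_def)
  qed
  then have "9 dvd 64 - card K" using card by (simp add: Compl_eq_Diff_UNIV card_Diff_subset)
  moreover obtain i where i: "i \<le> 6" "card K = 2^i" using pow2_dvd64[OF Kd] by auto
  moreover have "i \<in> {0,1,2,3,4,5,6}" using i by auto
  ultimately have "i = 0" using KU by auto
  then have "card K = 1" using i by simp
  moreover have "0 \<in> K" using f0 K_def by simp
  ultimately have K0: "K = {0}" by (metis card_1_singletonE singletonD)
  obtain w where w: "(f^^9) w \<noteq> w" using n9 by auto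
  define u where "u = (f^^9) w + w"
  have "u \<in> F" unfolding u_def F_def using p18 by (simp add: fa pa add.commute)
  moreover have "u \<noteq> 0" using w neg unfolding u_def by (metis add_eq_0_iff)
  moreover have "0 \<in> F" using f0 F_def by simp
  ultimately have F2: "card F \<noteq> 1" by (metis card_1_singletonE singletonD)
  have "9 dvd card (F - {0})"
  proof (rule orbit_dvd[where f="f^^2"])
    show "finite (F - {0})" by simp
    show "(f^^2) v \<in> F - {0}" if "v \<in> F - {0}" for v
    proof
      have "(f^^9) ((f^^2) v) = (f^^2) ((f^^9) v)" by (simp add: pa add.commute)
      then show "(f^^2) v \<in> F" using that F_def by simp
      show "(f^^2) v \<notin> {0}"
      proof
        assume "(f^^2) v \<in> {0}"
        then have "(f^^16) ((f^^2) v) = 0" using f0 by simp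
        then show False using that p18 by (simp add: pa)
      qed
    qed
    show "((f^^2)^^9) v = v" if "v \<in> F - {0}" for v using p18 by (simp add: gp)
    show "((f^^2)^^3) v \<noteq> v" if "v \<in> F - {0}" for v using that K0 by (auto simp: gp K_def)
  qed
  then have "9 dvd card F - 1" using \<open>0 \<in> F\<close> by (simp add: card_Diff_singleton)
  moreover obtain j where j: "j \<le> 6" "card F = 2^j" using pow2_dvd64[OF Fd] by auto
  moreover have "j \<in> {0,1,2,3,4,5,6}" using j by auto
  ultimately show False using FU F2 by auto
qed



lemma char2:
  assumes "CARD('k::{field,finite}) = 2 \<or> CARD('k) = 8"
  shows "(1::'k) + 1 = 0"
proof -
  have pos: "CHAR('k) > 0" by (rule finite_imp_CHAR_pos) simp
  have pr: "Factorial_Ring.prime CHAR('k)" by (rule prime_CHAR_semidom[OF pos])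
  have "CHAR('k) dvd 2^3 \<or> CHAR('k) dvd 2^1" using CHAR_dvd_CARD[where 'a='k] assms by auto
  then have "CHAR('k) dvd 2" using pr prime_dvd_power_nat by blast
  then have "CHAR('k) = 1 \<or> CHAR('k) = 2" using two_is_prime_nat unfolding prime_nat_iff by blast
  moreover have "CHAR('k) \<noteq> 1" using pr by auto
  ultimately have "CHAR('k) = 2" by blast
  then have "(of_nat 2 :: 'k) = 0" using of_nat_CHAR[where 'a='k] by simp
  then show ?thesis by simp
qed

lemma fermat8:
  fixes x :: "'k::{field,finite}"
  assumes "CARD('k) = 8" "x \<noteq> 0"
  shows "x ^ 7 = 1"
proof -
  let ?N = "UNIV - {0::'k}"
  have cN: "card ?N = 7" using assms by (simp add: card_Diff_subset)
  have bij: "bij_betw ((*) x) ?N ?N"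
    by (rule bij_betwI[where g="(*) (inverse x)"]) (use assms in \<open>auto simp: field_simps\<close>)
  have "prod id ?N = prod ((*) x) ?N"
    using prod.reindex_bij_betw[OF bij, of id] by simp
  also have "\<dots> = x ^ card ?N * prod id ?N" by (simp add: prod.distrib)
  finally have "1 * prod id ?N = x ^ 7 * prod id ?N" using cN by simp
  moreover have "prod id ?N \<noteq> 0" by (simp add: prod_zero_iff)
  ultimately show ?thesis by (metis mult_right_cancel)
qed

lemma inv_poly_aux:
  fixes x y :: "'k::comm_ring_1"
  assumes "y * x = 1"
  shows "y^3 + y + 1 = y^3 * (x^3 + x^2 + 1)"
proof -
  have "y^3 * (x^3 + x^2 + 1) = (y*x)^3 + y*(y*x)^2 + y^3"
    by (simp add: algebra_simps power_mult_distrib eval_nat_numeral)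
  then show ?thesis using assms by (simp add: add.commute add.left_commute)
qed

lemma exists_t:
  assumes "CARD('k::{field,finite}) = 8"
  shows "\<exists>t::'k. t^3 + t + 1 = 0"
proof -
  have h11: "(1::'k) + 1 = 0" using char2[where 'k='k] assms by simp
  have two: "(2::'k) = 0" using h11 by (simp add: one_add_one)
  have "\<not> UNIV \<subseteq> {0::'k, 1}"
  proof
    assume "UNIV \<subseteq> {0::'k, 1}"
    then have "card (UNIV::'k set) \<le> card {0::'k,1}" by (intro card_mono) auto
    also have "\<dots> \<le> 2" by (simp add: card_insert_le_m1)
    finally show False using assms by simp
  qed
  then obtain x :: 'k where x: "x \<noteq> 0" "x \<noteq> 1" by auto
  have x8: "x^8 = x" proof -
    have "x^8 = x * x^7" by (simp add: power_Suc[symmetric] del: power_Suc)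
    then show ?thesis using fermat8[OF assms x(1)] by simp
  qed
  have "x*(x+1)*(x^3+x+1)*(x^3+x^2+1) = x^8 + x + 2*(x^7+x^6+2*x^5+2*x^4+x^3+x^2)"
    by (simp add: algebra_simps eval_nat_numeral)
  then have id: "x*(x+1)*(x^3+x+1)*(x^3+x^2+1) = x^8 + x" using two by simp
  have x1: "x + 1 \<noteq> 0"
  proof
    assume "x + 1 = 0"
    then have "x = - 1" by (simp add: eq_neg_iff_add_eq_0)
    moreover have "-1 = (1::'k)" using minus_unique[OF h11] .
    ultimately show False using x by simp
  qed
  have "x^8 + x = 0" using x8 two by (simp add: mult_2[symmetric])
  then have "x*(x+1)*(x^3+x+1)*(x^3+x^2+1) = 0" by (simp only: id)
  then have "x^3+x+1 = 0 \<or> x^3+x^2+1 = 0" using x x1 by (simp only: mult_eq_0_iff) blast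
  then show ?thesis
  proof
    assume h: "x^3+x^2+1 = 0"
    have yx: "inverse x * x = 1" using x by simp
    have "(inverse x)^3 + inverse x + 1 = (inverse x)^3 * (x^3+x^2+1)" using inv_poly_aux[OF yx] .
    also have "\<dots> = 0" using h by simp
    finally show ?thesis by blast
  qed blast
qed


definition Lm :: "'k::comm_ring_1 \<Rightarrow> 'k \<Rightarrow> 'k \<Rightarrow> 'k^2^2" where
  "Lm t a b = (\<chi> i j. if i = 1 then (if j = 1 then b else a) else (if j = 1 then a else b + a*t))"

lemma Lm_mult: "Lm t a b ** Lm t 1 0 = Lm t (a*t + b) a"
  by (simp add: Lm_def vec_eq_iff forall_2 sum_2 matrix_matrix_mult_def algebra_simps)

lemma Lm_one: "Lm t 0 1 = mat 1"
  by (simp add: Lm_def vec_eq_iff forall_2 mat_def)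

lemma SL2_pow_add: "x [^]\<^bsub>SL2\<^esub> (m + (n::nat)) = x [^]\<^bsub>SL2\<^esub> m ** x [^]\<^bsub>SL2\<^esub> n"
  by (induction n) (simp_all add: SL2_def matrix_mul_assoc)

lemma GL6_pow_add: "x [^]\<^bsub>GL6\<^esub> (m + (n::nat)) = x [^]\<^bsub>GL6\<^esub> m ** x [^]\<^bsub>GL6\<^esub> n"
  by (induction n) (simp_all add: GL6_def matrix_mul_assoc)

lemma C2_pow: "(1::int) [^]\<^bsub>C2\<^esub> n = int (n mod 2)"
  by (induction n) (auto simp: C2_def integer_mod_group_def mod_Suc)

lemma DirProd_pow: "(a, b) [^]\<^bsub>G \<times>\<times> H\<^esub> (n::nat) = (a [^]\<^bsub>G\<^esub> n, b [^]\<^bsub>H\<^esub> n)"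
  by (induction n) (simp_all add: DirProd_def)

lemma centre_char2:
  assumes "(1::'k::field) + 1 = 0"
  shows "(SL2_centre :: ('k^2^2) set) = {mat 1}"
proof -
  have "c = 1" if "c * c = 1" for c :: 'k
  proof -
    have "(c + 1) * (c + 1) = c * c + (1 + 1) * c + 1" by (simp add: algebra_simps)
    also have "\<dots> = 0" by (simp only: assms that mult_zero_left add_0_right)
    finally have "c + 1 = 0" by (simp only: mult_eq_0_iff disj_absorb)
    then have "c = - 1" by (simp add: eq_neg_iff_add_eq_0)
    then show ?thesis using minus_unique[OF assms] by simp
  qed
  then have s1: "{mat c | c. c * c = 1} \<subseteq> {mat (1::'k) :: 'k^2^2}" by blast
  have "(mat 1 :: 'k^2^2) = mat 1 \<and> (1::'k) * 1 = 1" by simp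
  then have s2: "{mat (1::'k) :: 'k^2^2} \<subseteq> {mat c | c. c * c = 1}" by blast
  show ?thesis unfolding SL2_centre_def using s1 s2 by (rule subset_antisym)
qed

lemma PSL2_pow:
  assumes "(1::'k::field) + 1 = 0"
  shows "{x :: 'k^2^2} [^]\<^bsub>PSL2\<^esub> (n::nat) = {x [^]\<^bsub>SL2\<^esub> n}"
proof (induction n)
  case 0
  show ?case by (simp add: PSL2_def centre_char2[OF assms] SL2_def)
next
  case (Suc n)
  have "{x} [^]\<^bsub>PSL2\<^esub> Suc n = {x} [^]\<^bsub>PSL2\<^esub> n \<otimes>\<^bsub>PSL2\<^esub> {x}" by simp
  also have "\<dots> = {x [^]\<^bsub>SL2\<^esub> n} <#>\<^bsub>SL2\<^esub> {x}" unfolding Suc by (simp add: PSL2_def)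
  also have "\<dots> = {x [^]\<^bsub>SL2\<^esub> n ** x}" by (simp add: set_mult_def SL2_def)
  also have "\<dots> = {x [^]\<^bsub>SL2\<^esub> Suc n}" by (simp add: SL2_def)
  finally show ?case .
qed


lemma M_step: "Lm t 1 0 [^]\<^bsub>SL2\<^esub> n = Lm t a b \<Longrightarrow> Lm t 1 0 [^]\<^bsub>SL2\<^esub> Suc n = Lm t (a*t+b) a"
  by (simp add: SL2_def Lm_mult)

lemma M_step2: "Lm t 1 0 [^]\<^bsub>SL2\<^esub> n = Lm t a b \<Longrightarrow> m = Suc n \<Longrightarrow> a*t+b = a' \<Longrightarrow> a = b'
  \<Longrightarrow> Lm t 1 0 [^]\<^bsub>SL2\<^esub> m = Lm t a' b'"
  using M_step by blast

lemma M_pows: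
  fixes t :: "'k::field"
  assumes h11: "(1::'k) + 1 = 0" and ht: "t^3 + t + 1 = 0"
  shows "Lm t 1 0 [^]\<^bsub>SL2\<^esub> (9::nat) = mat 1" "Lm t 1 0 [^]\<^bsub>SL2\<^esub> (7::nat) = Lm t t (t^2+1)"
proof -
  have dbl: "y + y = 0" for y :: 'k
  proof -
    have "y + y = (1 + 1) * y" by (simp add: algebra_simps)
    then show ?thesis using h11 by simp
  qed
  have neg: "-y = y" for y :: 'k using minus_unique[OF dbl] .
  have t3: "t^3 = t + 1"
  proof -
    have "t^3 + (t + 1) = 0" using ht by (simp add: add.assoc)
    then have "t^3 = - (t + 1)" by (simp only: eq_neg_iff_add_eq_0)
    then show ?thesis using neg by simp
  qed
  define M where "M = Lm t 1 0"
  have p0: "M [^]\<^bsub>SL2\<^esub> (0::nat) = Lm t 0 1" by (simp add: SL2_def Lm_one)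
  have p1: "M [^]\<^bsub>SL2\<^esub> (1::nat) = Lm t 1 0"
    unfolding M_def by (rule M_step2[OF p0[unfolded M_def]]) (simp_all)
  have p2: "M [^]\<^bsub>SL2\<^esub> (2::nat) = Lm t t 1"
    unfolding M_def by (rule M_step2[OF p1[unfolded M_def]]) (simp_all)
  have p3: "M [^]\<^bsub>SL2\<^esub> (3::nat) = Lm t (t^2+1) t"
    unfolding M_def by (rule M_step2[OF p2[unfolded M_def]]) (simp_all add: power2_eq_square)
  have e4: "(t^2+1)*t + t = t + 1"
  proof -
    have "(t^2+1)*t + t = t^3 + (t + t)" by (simp add: algebra_simps power2_eq_square power3_eq_cube)
    then show ?thesis using t3 dbl by simp
  qed
  have p4: "M [^]\<^bsub>SL2\<^esub> (4::nat) = Lm t (t+1) (t^2+1)"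
    unfolding M_def by (rule M_step2[OF p3[unfolded M_def]]) (simp_all add: e4)
  have e5: "(t+1)*t + (t^2+1) = t + 1"
  proof -
    have "(t+1)*t + (t^2+1) = (t^2 + t^2) + t + 1" by (simp add: algebra_simps power2_eq_square)
    then show ?thesis using dbl by simp
  qed
  have p5: "M [^]\<^bsub>SL2\<^esub> (5::nat) = Lm t (t+1) (t+1)"
    unfolding M_def by (rule M_step2[OF p4[unfolded M_def]]) (simp_all add: e5)
  have e6: "(t+1)*t + (t+1) = t^2 + 1"
  proof -
    have "(t+1)*t + (t+1) = t^2 + (t + t) + 1" by (simp add: algebra_simps power2_eq_square)
    then show ?thesis using dbl by simp
  qed
  have p6: "M [^]\<^bsub>SL2\<^esub> (6::nat) = Lm t (t^2+1) (t+1)"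
    unfolding M_def by (rule M_step2[OF p5[unfolded M_def]]) (simp_all add: e6)
  have e7: "(t^2+1)*t + (t+1) = t"
  proof -
    have "(t^2+1)*t + (t+1) = t^3 + (t + t) + 1" by (simp add: algebra_simps power2_eq_square power3_eq_cube)
    then show ?thesis using dbl t3 h11 by (simp add: add.assoc)
  qed
  have p7: "M [^]\<^bsub>SL2\<^esub> (7::nat) = Lm t t (t^2+1)"
    unfolding M_def by (rule M_step2[OF p6[unfolded M_def]]) (simp_all add: e7)
  have e8: "t*t + (t^2+1) = 1"
  proof -
    have "t*t + (t^2+1) = (t^2 + t^2) + 1" by (simp add: algebra_simps power2_eq_square)
    then show ?thesis using dbl by simp
  qed
  have p8: "M [^]\<^bsub>SL2\<^esub> (8::nat) = Lm t 1 t"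
    unfolding M_def by (rule M_step2[OF p7[unfolded M_def]]) (simp_all add: e8)
  have p9: "M [^]\<^bsub>SL2\<^esub> (9::nat) = Lm t 0 1"
    unfolding M_def by (rule M_step2[OF p8[unfolded M_def]]) (simp_all add: dbl)
  show "Lm t 1 0 [^]\<^bsub>SL2\<^esub> (9::nat) = mat 1" using p9 M_def Lm_one by simp
  show "Lm t 1 0 [^]\<^bsub>SL2\<^esub> (7::nat) = Lm t t (t^2+1)" using p7 M_def by simp
qed

theorem lemma3p21:
  fixes F2 :: "'a::{field, finite} itself" and F8 :: "'b::{field, finite} itself"
  assumes "CARD('a) = 2" and "CARD('b) = 8"
  shows "\<not> (\<exists>H. subgroup H (GL6 :: ('a ^ 6 ^ 6) monoid) \<and>
             ((GL6 :: ('a ^ 6 ^ 6) monoid)\<lparr>carrier := H\<rparr>) \<cong>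
               DirProd (PSL2 :: ('b ^ 2 ^ 2) set monoid) C2)"
proof
  assume "\<exists>H. subgroup H (GL6 :: ('a ^ 6 ^ 6) monoid) \<and>
             ((GL6 :: ('a ^ 6 ^ 6) monoid)\<lparr>carrier := H\<rparr>) \<cong>
               DirProd (PSL2 :: ('b ^ 2 ^ 2) set monoid) C2"
  then obtain H \<phi> where sg: "subgroup H (GL6 :: ('a ^ 6 ^ 6) monoid)"
    and iso: "\<phi> \<in> iso ((GL6 :: ('a ^ 6 ^ 6) monoid)\<lparr>carrier := H\<rparr>) (DirProd (PSL2 :: ('b ^ 2 ^ 2) set monoid) C2)"
    unfolding is_iso_def by blast
  let ?G = "(GL6 :: ('a ^ 6 ^ 6) monoid)\<lparr>carrier := H\<rparr>"
  let ?T = "DirProd (PSL2 :: ('b ^ 2 ^ 2) set monoid) C2"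
  have ha: "(1::'a) + 1 = 0" using char2[where 'k='a] assms by simp
  have hb: "(1::'b) + 1 = 0" using char2[where 'k='b] assms by simp
  obtain t :: 'b where ht: "t^3 + t + 1 = 0" using exists_t[where 'k='b] assms by blast
  define M where "M = Lm t 1 0"
  have M9: "M [^]\<^bsub>SL2\<^esub> (9::nat) = mat 1" using M_pows[OF hb ht] M_def by simp
  have M7: "M [^]\<^bsub>SL2\<^esub> (7::nat) = Lm t t (t^2+1)" using M_pows[OF hb ht] M_def by simp
  have M1: "M [^]\<^bsub>SL2\<^esub> (1::nat) = M" by (simp add: SL2_def)
  have M19: "M [^]\<^bsub>SL2\<^esub> (19::nat) = M"
  proof -
    have "M [^]\<^bsub>SL2\<^esub> (19::nat) = M [^]\<^bsub>SL2\<^esub> (9::nat) ** (M [^]\<^bsub>SL2\<^esub> (9::nat) ** M [^]\<^bsub>SL2\<^esub> (1::nat))"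
      using SL2_pow_add[of M 9 10] SL2_pow_add[of M 9 1] by simp
    then show ?thesis using M9 M1 by simp
  qed
  have t1: "t \<noteq> 1"
  proof
    assume "t = 1"
    then have "(1::'b) + 1 + 1 = 0" using ht by (simp only: power_one)
    then have "(0::'b) + 1 = 0" by (simp only: hb)
    then show False by simp
  qed
  have M7ne: "M [^]\<^bsub>SL2\<^esub> (7::nat) \<noteq> M"
  proof
    assume "M [^]\<^bsub>SL2\<^esub> (7::nat) = M"
    then have "Lm t t (t^2+1) $ 1 $ 2 = Lm t 1 0 $ 1 $ 2" using M7 M_def by simp
    then show False using t1 by (simp add: Lm_def)
  qed
  have detM: "det M = 1"
  proof -
    have "det M = 0 * t - 1 * 1" by (simp add: det_2 M_def Lm_def)
    then show ?thesis using minus_unique[OF hb] by simp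
  qed
  define e where "e = ({M}, 1::int)"
  have cen: "(SL2_centre :: ('b^2^2) set) = {mat 1}" by (rule centre_char2[OF hb])
  have eT: "e \<in> carrier ?T"
  proof -
    have "{M} = SL2_centre #>\<^bsub>SL2\<^esub> M" by (simp add: cen r_coset_def SL2_def)
    moreover have "M \<in> carrier SL2" using detM by (simp add: SL2_def)
    ultimately have "{M} \<in> carrier (PSL2 :: ('b ^ 2 ^ 2) set monoid)"
      by (simp add: PSL2_def carrier_FactGroup)
    moreover have "(1::int) \<in> carrier C2" by (simp add: C2_def carrier_integer_mod_group)
    ultimately show ?thesis by (simp add: e_def DirProd_def)
  qed
  have epow: "e [^]\<^bsub>?T\<^esub> (n::nat) = ({M [^]\<^bsub>SL2\<^esub> n}, int (n mod 2))" for n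
    by (simp add: e_def DirProd_pow PSL2_pow[OF hb] C2_pow)
  have hom: "\<phi> \<in> hom ?G ?T" and bij: "bij_betw \<phi> H (carrier ?T)" using iso by (auto simp: iso_def)
  obtain g where gH: "g \<in> H" and ge: "\<phi> g = e" using bij eT by (metis bij_betw_imp_surj_on imageE)
  have inj: "inj_on \<phi> H" using bij by (simp add: bij_betw_def)
  have gpowH: "g [^]\<^bsub>GL6\<^esub> (n::nat) \<in> H" for n
    by (induction n) (use sg gH in \<open>simp_all add: subgroup.one_closed subgroup.m_closed\<close>)
  have g1: "g [^]\<^bsub>GL6\<^esub> (1::nat) = g" by (simp add: GL6_def)
  have hp: "\<phi> (g [^]\<^bsub>GL6\<^esub> (Suc n)) = e [^]\<^bsub>?T\<^esub> (Suc n)" for n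
  proof (induction n)
    case 0
    show ?case using g1 ge epow[of 1] M1 by (simp add: e_def)
  next
    case (Suc n)
    have "g [^]\<^bsub>GL6\<^esub> (Suc (Suc n)) = g [^]\<^bsub>GL6\<^esub> (Suc n) \<otimes>\<^bsub>?G\<^esub> g" by simp
    then have "\<phi> (g [^]\<^bsub>GL6\<^esub> (Suc (Suc n))) = \<phi> (g [^]\<^bsub>GL6\<^esub> (Suc n)) \<otimes>\<^bsub>?T\<^esub> \<phi> g"
      using hom_mult[OF hom, of "g [^]\<^bsub>GL6\<^esub> (Suc n)" g] gpowH[of "Suc n"] gH by simp
    then show ?case using Suc ge by simp
  qed
  have back_eq: "g [^]\<^bsub>GL6\<^esub> (Suc n) = g" if "e [^]\<^bsub>?T\<^esub> (Suc n) = e" for n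
  proof -
    have "\<phi> (g [^]\<^bsub>GL6\<^esub> (Suc n)) = \<phi> g" using hp[of n] that ge by simp
    then show ?thesis using inj gpowH[of "Suc n"] gH by (meson inj_on_def)
  qed
  have g19: "g [^]\<^bsub>GL6\<^esub> (19::nat) = g"
    using back_eq[of 18] epow[of 19] M19 by (simp add: e_def)
  have "invertible g" using sg gH by (auto simp: GL6_def dest: subgroup.mem_carrier)
  then obtain g' where g': "g ** g' = mat 1" unfolding invertible_def by blast
  have g18: "g [^]\<^bsub>GL6\<^esub> (18::nat) = mat 1"
  proof -
    have "g [^]\<^bsub>GL6\<^esub> (19::nat) = g [^]\<^bsub>GL6\<^esub> (18::nat) ** g"
      using GL6_pow_add[of g 18 1] g1 by simp
    then have "g [^]\<^bsub>GL6\<^esub> (18::nat) ** g = g" using g19 by simp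
    then have "(g [^]\<^bsub>GL6\<^esub> (18::nat) ** g) ** g' = g ** g'" by simp
    then show ?thesis using g' by (simp add: matrix_mul_assoc[symmetric])
  qed
  define f where "f v = g *v v" for v :: "'a^6"
  have fpow: "(f^^n) v = g [^]\<^bsub>GL6\<^esub> n *v v" for n v
  proof (induction n arbitrary: v)
    case 0
    then show ?case by (simp add: GL6_def)
  next
    case (Suc n)
    have "(f^^Suc n) v = (f^^n) (f v)" by (simp add: funpow_Suc_right del: funpow.simps)
    also have "\<dots> = g [^]\<^bsub>GL6\<^esub> n *v (f v)" by (rule Suc.IH)
    also have "\<dots> = g [^]\<^bsub>GL6\<^esub> n *v (g *v v)" by (simp only: f_def)
    also have "\<dots> = g [^]\<^bsub>GL6\<^esub> (Suc n) *v v" by (simp add: GL6_def matrix_vector_mul_assoc)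
    finally show ?case .
  qed
  have not_id: "\<exists>v. (f^^k) v \<noteq> v" if k: "k \<ge> 1" "e [^]\<^bsub>?T\<^esub> (Suc k) \<noteq> e" for k
  proof (rule ccontr)
    assume "\<not> (\<exists>v. (f^^k) v \<noteq> v)"
    then have "\<forall>v. g [^]\<^bsub>GL6\<^esub> k *v v = mat 1 *v v" using fpow by simp
    then have gk: "g [^]\<^bsub>GL6\<^esub> k = mat 1" using matrix_eq by blast
    have "g [^]\<^bsub>GL6\<^esub> (Suc k) = g" using GL6_pow_add[of g k 1] g1 gk by simp
    then have "\<phi> g = e [^]\<^bsub>?T\<^esub> (Suc k)" using hp[of k] by simp
    then show False using ge k by simp
  qed
  show False
  proof (rule no_ord18[of f])
    show "f (x + y) = f x + f y" for x y by (simp add: f_def matrix_vector_right_distrib)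
    show "x + x = 0" for x :: "'a^6"
    proof -
      have "x $ i + x $ i = 0" for i
      proof -
        have "x $ i + x $ i = (1 + 1) * x $ i" by (simp add: algebra_simps)
        then show ?thesis using ha by simp
      qed
      then show ?thesis by (simp add: vec_eq_iff)
    qed
    show "card (UNIV :: ('a^6) set) = 64" using assms by simp
    show "(f^^18) v = v" for v using fpow g18 by simp
    show "\<exists>v. (f^^9) v \<noteq> v" using not_id[of 9] epow[of 10] by (simp add: e_def)
    show "\<exists>v. (f^^6) v \<noteq> v" using not_id[of 6] epow[of 7] M7ne by (simp add: e_def)
  qed
qed
end
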